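(* Let $\mathcal{S}\in\mathrm{Rep}$. Then there is a unique standard extended multi-segment $\mathcal{S}'\in[\mathcal{S}]$.
   Context: Formal extended segment: $([A,B]_\rho,\mu)$ with $\rho$ irreducible self-dual supercuspidal of some $\mathrm{GL}_d(F)$ ($F$ $p$-adic), $A-B\in\mathbb{Z}_{\ge0}$, $\mu\in\mathbb{Z}$, $\mu\equiv b\pmod2$ with $b=A-B+1$, $a=A+B+1$; extended segment if moreover $|\mu|\le b$. A formal extended multi-segment $\mathcal{S}$: a finite set $C_{\mathcal{S}}$ of such $\rho$ and sequences $(([A_i^\rho,B_i^\rho]_\rho,\mu_i^\rho))_{i=1}^{n_\rho}$ of formal extended segments with: $A_i^\rho>A_j^\rho$ and $B_i^\rho>B_j^\rho$ imply $i>j$; $A_i^\rho+B_i^\rho\ge0$; $\bigoplus_{\rho,i}\rho\boxtimes S_{a_i^\rho}\boxtimes S_{b_i^\rho}$ is an Arthur parameter of good parity for some $G_n$ ($G_n$ split $\mathrm{SO}_{2n+1}(F)$ or $\mathrm{Sp}_{2n}(F)$); $\sum_\rho\sum_i(\lfloor\mu_i^\rho/2\rfloor+\mu_i^\rho\sum_{j<i}(b_j^\rho-1))\equiv0\pmod2$. Extended multi-segment: all entries are extended segments. Admissible: for each $\rho$ with some $B_i^\rho<0$, $B_i^\rho>B_j^\rho\Rightarrow i>j$. Condition (N): $|A_i^\rho-A_{i-1}^\rho|+|B_i^\rho-B_{i-1}^\rho|\ge|\mu_i^\rho-\mu_{i-1}^\rho|$ for all $\rho$, $1<i\le n_\rho$.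 Reorder $R_i^\rho$ (changing only positions $i,i+1$ of the $\rho$-sequence): if $[A_i,B_i]\subseteq[A_{i+1},B_{i+1}]$, replace by $([A_{i+1},B_{i+1}]_\rho,2\mu_i-\mu_{i+1}),([A_i,B_i]_\rho,\mu_i)$; if $[A_i,B_i]\supseteq[A_{i+1},B_{i+1}]$, replace by $([A_{i+1},B_{i+1}]_\rho,\mu_{i+1}),([A_i,B_i]_\rho,2\mu_{i+1}-\mu_i)$; if $A_{i+1}\ge A_i$, $B_{i+1}\ge B_i$, do nothing. $[\mathcal{S}]$ is the equivalence class generated by these operations. $\mathrm{Rep}$: admissible extended multi-segments $\mathcal{S}$ such that every element of $[\mathcal{S}]$ satisfies (N), and $|\hat\mu_i^\rho|\le a_i^\rho$ for all $i,\rho$, where $\hat\mu_i^\rho=\mu_i^\rho$ if $B_i^\rho\in\mathbb{Z}$ and $\mu_i^\rho-1$ otherwise. $\mathcal{S}$ is standard if for all $\rho$, $i,j$: ($B_i^\rho<B_j^\rho$, or $B_i^\rho=B_j^\rho$ and $A_i^\rho>A_j^\rho$) implies $i<j$. *)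

theory Defs
  imports Complex_Main
begin

text \<open>
  A (formal) extended segment ([A,B]_rho, mu) attached to rho is stored as a triple (A, B, mu)
  with A, B rational (half-integers) and mu an integer; the supercuspidal rho is recorded by the
  position in the multi-segment (see below).
\<close>

type_synonym seg = "rat \<times> rat \<times> int"

definition segA :: "seg \<Rightarrow> rat" where "segA s = fst s"
definition segB :: "seg \<Rightarrow> rat" where "segB s = fst (snd s)"
definition segmu :: "seg \<Rightarrow> int" where "segmu s = snd (snd s)"

definition seg_a :: "seg \<Rightarrow> int" where "seg_a s = \<lfloor>segA s + segB s\<rfloor> + 1"
definition seg_b :: "seg \<Rightarrow> int" where "seg_b s = \<lfloor>segA s - segB s\<rfloor> + 1"

definition formal_ext_segment :: "seg \<Rightarrow> bool" where
  "formal_ext_segment s \<longleftrightarrow>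
     segA s - segB s \<in> \<int> \<and> segA s + segB s \<in> \<int> \<and> segB s \<le> segA s \<and>
     even (segmu s - seg_b s)"

definition ext_segment :: "seg \<Rightarrow> bool" where
  "ext_segment s \<longleftrightarrow> formal_ext_segment s \<and> \<bar>segmu s\<bar> \<le> seg_b s"

text \<open>
  A multi-segment is a map S from supercuspidals rho (elements of the type 'r) to the finite
  sequence of segments attached to rho; C_S = {rho. S rho \<noteq> []}.
  The supercuspidals are described by the data:
  d rho (rho is a representation of GL_{d rho}(F)), orth rho (rho self-dual of orthogonal type;
  otherwise of symplectic type), dt rho (the determinant character of rho, an element of an
  abelian group of characters written additively).
\<close>

definition supp :: "('r \<Rightarrow> seg list) \<Rightarrow> 'r set" where
  "supp S = {\<rho>. S \<rho> \<noteq> []}"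

definition parity_sum :: "seg list \<Rightarrow> int" where
  "parity_sum L = (\<Sum>i<length L. segmu (L!i) div 2 + segmu (L!i) * (\<Sum>j<i. seg_b (L!j) - 1))"

definition summand_orth :: "('r \<Rightarrow> bool) \<Rightarrow> 'r \<Rightarrow> seg \<Rightarrow> bool" where
  "summand_orth orth \<rho> s \<longleftrightarrow> (orth \<rho> \<longleftrightarrow> even (seg_a s + seg_b s))"

definition param_dim :: "('r \<Rightarrow> nat) \<Rightarrow> ('r \<Rightarrow> seg list) \<Rightarrow> int" where
  "param_dim d S = (\<Sum>\<rho>\<in>supp S. \<Sum>s\<leftarrow>S \<rho>. int (d \<rho>) * seg_a s * seg_b s)"

text \<open>Determinant of the parameter: det(rho x S_a x S_b) = det(rho)^(ab).\<close>
definition param_det :: "('r \<Rightarrow> 'q::ab_group_add) \<Rightarrow> ('r \<Rightarrow> seg list) \<Rightarrow> 'q" where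
  "param_det dt S = (\<Sum>\<rho>\<in>supp S. \<Sum>s\<leftarrow>S \<rho>. if odd (seg_a s * seg_b s) then dt \<rho> else 0)"

text \<open>The sum of rho x S_a x S_b is an Arthur parameter of good parity for some G_n:
  either G_n = Sp_{2n} (dual SO_{2n+1}: all summands orthogonal, dimension 2n+1, trivial
  determinant) or G_n = split SO_{2n+1} (dual Sp_{2n}: all summands symplectic, dimension 2n).\<close>
definition good_parity_param ::
  "('r \<Rightarrow> nat) \<Rightarrow> ('r \<Rightarrow> bool) \<Rightarrow> ('r \<Rightarrow> 'q::ab_group_add) \<Rightarrow> ('r \<Rightarrow> seg list) \<Rightarrow> bool" where
  "good_parity_param d orth dt S \<longleftrightarrow>
     (\<exists>n::nat.
        ((\<forall>\<rho>\<in>supp S. \<forall>s\<in>set (S \<rho>). summand_orth orth \<rho> s) \<and>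
           param_dim d S = 2 * int n + 1 \<and> param_det dt S = 0)
      \<or> ((\<forall>\<rho>\<in>supp S. \<forall>s\<in>set (S \<rho>). \<not> summand_orth orth \<rho> s) \<and>
           param_dim d S = 2 * int n))"

definition formal_ext_multiseg ::
  "('r \<Rightarrow> nat) \<Rightarrow> ('r \<Rightarrow> bool) \<Rightarrow> ('r \<Rightarrow> 'q::ab_group_add) \<Rightarrow> ('r \<Rightarrow> seg list) \<Rightarrow> bool" where
  "formal_ext_multiseg d orth dt S \<longleftrightarrow>
     finite (supp S) \<and>
     (\<forall>\<rho>. \<forall>s\<in>set (S \<rho>). formal_ext_segment s) \<and>
     (\<forall>\<rho>. \<forall>i<length (S \<rho>). \<forall>j<length (S \<rho>).
        segA (S \<rho> ! i) > segA (S \<rho> ! j) \<and> segB (S \<rho> ! i) > segB (S \<rho> ! j) \<longrightarrow> i > j) \<and>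
     (\<forall>\<rho>. \<forall>s\<in>set (S \<rho>). segA s + segB s \<ge> 0) \<and>
     good_parity_param d orth dt S \<and>
     even (\<Sum>\<rho>\<in>supp S. parity_sum (S \<rho>))"

definition ext_multiseg ::
  "('r \<Rightarrow> nat) \<Rightarrow> ('r \<Rightarrow> bool) \<Rightarrow> ('r \<Rightarrow> 'q::ab_group_add) \<Rightarrow> ('r \<Rightarrow> seg list) \<Rightarrow> bool" where
  "ext_multiseg d orth dt S \<longleftrightarrow>
     formal_ext_multiseg d orth dt S \<and> (\<forall>\<rho>. \<forall>s\<in>set (S \<rho>). ext_segment s)"

definition admissible :: "('r \<Rightarrow> seg list) \<Rightarrow> bool" where
  "admissible S \<longleftrightarrow>
     (\<forall>\<rho>. (\<exists>s\<in>set (S \<rho>). segB s < 0) \<longrightarrow>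
        (\<forall>i<length (S \<rho>). \<forall>j<length (S \<rho>). segB (S \<rho> ! i) > segB (S \<rho> ! j) \<longrightarrow> i > j))"

definition condN :: "('r \<Rightarrow> seg list) \<Rightarrow> bool" where
  "condN S \<longleftrightarrow>
     (\<forall>\<rho>. \<forall>i. i + 1 < length (S \<rho>) \<longrightarrow>
        \<bar>segA (S \<rho> ! (i+1)) - segA (S \<rho> ! i)\<bar> + \<bar>segB (S \<rho> ! (i+1)) - segB (S \<rho> ! i)\<bar>
          \<ge> of_int \<bar>segmu (S \<rho> ! (i+1)) - segmu (S \<rho> ! i)\<bar>)"

definition reorder :: "nat \<Rightarrow> seg list \<Rightarrow> seg list" where
  "reorder i L =
     (let s = L ! i; t = L ! (i+1) in
      if segB t \<le> segB s \<and> segA s \<le> segA t then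
        L[i := (segA t, segB t, 2 * segmu s - segmu t), i+1 := s]
      else if segB s \<le> segB t \<and> segA t \<le> segA s then
        L[i := t, i+1 := (segA s, segB s, 2 * segmu t - segmu s)]
      else L)"

definition reorder_step :: "('r \<Rightarrow> seg list) \<Rightarrow> ('r \<Rightarrow> seg list) \<Rightarrow> bool" where
  "reorder_step S S' \<longleftrightarrow>
     (\<exists>\<rho> i. i + 1 < length (S \<rho>) \<and> S' = S(\<rho> := reorder i (S \<rho>)))"

definition equiv_class :: "('r \<Rightarrow> seg list) \<Rightarrow> ('r \<Rightarrow> seg list) set" where
  "equiv_class S = {S'. equivclp reorder_step S S'}"

definition hat_mu :: "seg \<Rightarrow> int" where
  "hat_mu s = (if segB s \<in> \<int> then segmu s else segmu s - 1)"

definition Rep ::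
  "('r \<Rightarrow> nat) \<Rightarrow> ('r \<Rightarrow> bool) \<Rightarrow> ('r \<Rightarrow> 'q::ab_group_add) \<Rightarrow> ('r \<Rightarrow> seg list) \<Rightarrow> bool" where
  "Rep d orth dt S \<longleftrightarrow>
     ext_multiseg d orth dt S \<and> admissible S \<and>
     (\<forall>S'\<in>equiv_class S. condN S') \<and>
     (\<forall>\<rho>. \<forall>s\<in>set (S \<rho>). \<bar>hat_mu s\<bar> \<le> seg_a s)"

definition standard :: "('r \<Rightarrow> seg list) \<Rightarrow> bool" where
  "standard S \<longleftrightarrow>
     (\<forall>\<rho>. \<forall>i<length (S \<rho>). \<forall>j<length (S \<rho>).
        (segB (S \<rho> ! i) < segB (S \<rho> ! j) \<or>
         (segB (S \<rho> ! i) = segB (S \<rho> ! j) \<and> segA (S \<rho> ! i) > segA (S \<rho> ! j))) \<longrightarrow> i < j)"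

end

theory Submission
  imports Defs "HOL-Library.Multiset" "HOL-Library.Product_Lexorder"
begin


lemma seg_simps[simp]: "segA (a,b,m) = a" "segB (a,b,m) = b" "segmu (a,b,m) = m"
  by (simp_all add: segA_def segB_def segmu_def)

lemma seg_eta: "(segA x, segB x, segmu x) = x"
  by (simp add: segA_def segB_def segmu_def)

lemma seg_ab_cong:
  assumes "segA u = segA t" "segB u = segB t"
  shows "seg_a u = seg_a t" "seg_b u = seg_b t"
  using assms by (simp_all add: seg_a_def seg_b_def)

definition lstep :: "seg list \<Rightarrow> seg list \<Rightarrow> bool" where
  "lstep L L' \<longleftrightarrow> (\<exists>i. i + 1 < length L \<and> L' = reorder i L)"

lemma reorder_app:
  "reorder (length xs) (xs @ s # t # ys) =
    (if segB t \<le> segB s \<and> segA s \<le> segA t then xs @ (segA t, segB t, 2 * segmu s - segmu t) # s # ys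
     else if segB s \<le> segB t \<and> segA t \<le> segA s then xs @ t # (segA s, segB s, 2 * segmu t - segmu s) # ys
     else xs @ s # t # ys)"
  by (simp add: reorder_def nth_append list_update_append)

lemma split3:
  assumes "i + 1 < length L"
  obtains xs s t ys where "L = xs @ s # t # ys" "length xs = i" "L ! i = s" "L ! (i+1) = t"
proof -
  have "L = take i L @ L ! i # L ! (i+1) # drop (i+2) L"
    using assms by (simp add: Cons_nth_drop_Suc id_take_nth_drop)
  moreover have "length (take i L) = i" using assms by simp
  ultimately show ?thesis using that by blast
qed

lemma reorder_Cons: "reorder (Suc i) (a # L) = a # reorder i L"
  by (simp add: reorder_def Let_def)

lemma lstep_Cons: "lstep L L' \<Longrightarrow> lstep (a # L) (a # L')"
  unfolding lstep_def by (metis Suc_eq_plus1 length_Cons not_less_eq reorder_Cons)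

lemma lsteps_Cons: "lstep\<^sup>*\<^sup>* L L' \<Longrightarrow> lstep\<^sup>*\<^sup>* (a # L) (a # L')"
  by (induction rule: rtranclp_induct) (auto intro: rtranclp.rtrancl_into_rtrancl lstep_Cons)

fun psr :: "int \<Rightarrow> seg list \<Rightarrow> int" where
  "psr P [] = 0"
| "psr P (x # xs) = segmu x div 2 + segmu x * P + psr (P + (seg_b x - 1)) xs"

lemma psr_sum: "psr P L = (\<Sum>i<length L. segmu (L!i) div 2 + segmu (L!i) * (P + (\<Sum>j<i. seg_b (L!j) - 1)))"
proof (induction L arbitrary: P)
  case Nil then show ?case by simp
next
  case (Cons x xs)
  have e: "segmu ((x#xs)!Suc i) div 2 + segmu ((x#xs)!Suc i) * (P + (\<Sum>j<Suc i. seg_b ((x#xs)!j) - 1))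
     = segmu (xs!i) div 2 + segmu (xs!i) * ((P + (seg_b x - 1)) + (\<Sum>j<i. seg_b (xs!j) - 1))" for i
    by (simp del: sum.lessThan_Suc add: sum.lessThan_Suc_shift algebra_simps)
  show ?case
    apply (simp only: length_Cons sum.lessThan_Suc_shift e)
    apply (simp add: Cons.IH add.assoc)
    done
qed

lemma parity_sum_psr: "parity_sum L = psr 0 L"
  by (simp add: parity_sum_def psr_sum)

lemma psr_append: "psr P (xs @ ys) = psr P xs + psr (P + (\<Sum>x\<leftarrow>xs. seg_b x - 1)) ys"
  by (induction xs arbitrary: P) (simp_all add: algebra_simps)

lemma psr_swap1:
  assumes "even (segmu s - seg_b s)" "even (segmu t - seg_b t)"
  shows "even (psr Q ((segA t, segB t, 2*segmu s - segmu t) # s # ys) - psr Q (s # t # ys))"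
proof -
  define ms where "ms = segmu s"
  define mt where "mt = segmu t"
  define bs where "bs = seg_b s"
  define bt where "bt = seg_b t"
  have bu: "seg_b (segA t, segB t, m) = bt" for m
    using seg_ab_cong(2)[of "(segA t, segB t, m)" t] bt_def by simp
  obtain k l where kl: "ms = bs + 2*k" "mt = bt + 2*l"
    using assms unfolding ms_def mt_def bs_def bt_def by (metis add.commute diff_add_cancel evenE)
  have h1: "(2*ms - mt) div 2 - mt div 2 = ms - mt" by presburger
  have "psr Q ((segA t, segB t, 2*segmu s - segmu t) # s # ys) - psr Q (s # t # ys)
     = ((2*ms - mt) div 2 - mt div 2) + 2*(ms-mt)*Q + ms*(bt - 1) - mt*(bs - 1)"
    by (simp add: bu ms_def [symmetric] mt_def [symmetric] bs_def [symmetric] bt_def [symmetric] algebra_simps)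
  also have "\<dots> = 2 * (k*bt - l*bs + (ms-mt)*Q)"
    unfolding h1 by (simp add: kl algebra_simps)
  finally show ?thesis by simp
qed



definition sub :: "seg \<Rightarrow> seg \<Rightarrow> bool" where
  "sub x z \<longleftrightarrow> segB z \<le> segB x \<and> segA x \<le> segA z \<and> (segA x \<noteq> segA z \<or> segB x \<noteq> segB z)"

definition fstep :: "seg \<Rightarrow> int \<times> int \<Rightarrow> seg \<Rightarrow> int \<times> int" where
  "fstep z st y = (if sub y z then (- fst st, snd st + 2 * fst st * segmu y) else st)"

definition FF :: "seg list \<Rightarrow> seg \<Rightarrow> int \<times> int" where
  "FF p z = foldl (fstep z) (1,0) p"

definition nuval :: "seg list \<Rightarrow> seg \<Rightarrow> int" where
  "nuval p z = snd (FF p z) + fst (FF p z) * segmu z"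

fun nus :: "seg list \<Rightarrow> seg list \<Rightarrow> seg list" where
  "nus p [] = []"
| "nus p (x # xs) = (segA x, segB x, nuval p x) # nus (p @ [x]) xs"

lemma FF_snoc: "FF (p @ [x]) z = fstep z (FF p z) x"
  by (simp add: FF_def)

lemma nus_append: "nus p (xs @ ys) = nus p xs @ nus (p @ xs) ys"
  by (induction xs arbitrary: p) simp_all

lemma nus_cong: "(\<And>z. FF p z = FF q z) \<Longrightarrow> nus p ys = nus q ys"
proof (induction ys arbitrary: p q)
  case Nil then show ?case by simp
next
  case (Cons x ys)
  have "nus (p @ [x]) ys = nus (q @ [x]) ys"
    by (rule Cons.IH) (simp add: FF_snoc Cons.prems)
  then show ?case by (simp add: nuval_def Cons.prems)
qed

lemma fstep_AB: "segA z = segA z' \<Longrightarrow> segB z = segB z' \<Longrightarrow> fstep z = fstep z'"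
  by (intro ext) (simp add: fstep_def sub_def)

lemma FF_AB: "segA z = segA z' \<Longrightarrow> segB z = segB z' \<Longrightarrow> FF p z = FF p z'"
  unfolding FF_def using fstep_AB[of z z'] by simp

lemma fstep_swap:
  assumes "segB t \<le> segB s" "segA s \<le> segA t"
  shows "fstep z (fstep z st s) t = fstep z (fstep z st (segA t, segB t, 2*segmu s - segmu t)) s"
proof -
  have su: "sub (segA t, segB t, m) z = sub t z" for m by (simp add: sub_def)
  have ts: "sub t z \<Longrightarrow> sub s z" using assms unfolding sub_def by auto
  show ?thesis
  proof (cases "sub s z")
    case True
    then show ?thesis unfolding fstep_def su by (cases "sub t z") (simp_all add: algebra_simps)
  next
    case False
    then have "\<not> sub t z" using ts by blast
    then show ?thesis unfolding fstep_def su using False by simp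
  qed
qed

lemma foldl_noop: "(\<forall>y\<in>set p. \<not> sub y z) \<Longrightarrow> foldl (fstep z) st p = st"
  by (induction p arbitrary: st) (simp_all add: fstep_def)

lemma nus_swap1:
  assumes "segB t \<le> segB s" "segA s \<le> segA t"
    and "segA s = segA t \<and> segB s = segB t \<Longrightarrow> segmu s = segmu t"
  shows "mset (nus p (xs @ (segA t, segB t, 2*segmu s - segmu t) # s # ys)) = mset (nus p (xs @ s # t # ys))"
proof -
  define u where "u = (segA t, segB t, 2*segmu s - segmu t)"
  define q where "q = p @ xs"
  have c: "nus (q @ [u, s]) ys = nus (q @ [s, t]) ys"
  proof (rule nus_cong)
    fix z
    have "FF (q @ [u, s]) z = fstep z (fstep z (FF q z) u) s"
      using FF_snoc[of "q @ [u]" s z] FF_snoc[of q u z] by simp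
    also have "\<dots> = fstep z (fstep z (FF q z) s) t"
      using fstep_swap[OF assms(1,2)] u_def by simp
    also have "\<dots> = FF (q @ [s, t]) z"
      using FF_snoc[of "q @ [s]" t z] FF_snoc[of q s z] by simp
    finally show "FF (q @ [u, s]) z = FF (q @ [s, t]) z" .
  qed
  have n1: "nuval (q @ [u]) s = nuval q s"
  proof -
    have "\<not> sub u s" using assms unfolding sub_def u_def by auto
    then show ?thesis by (simp add: nuval_def FF_snoc fstep_def)
  qed
  have n2: "nuval q u = nuval (q @ [s]) t"
  proof -
    have fu: "FF q u = FF q t" by (rule FF_AB) (simp_all add: u_def)
    show ?thesis
    proof (cases "sub s t")
      case True
      then show ?thesis unfolding nuval_def FF_snoc fu by (simp add: fstep_def u_def algebra_simps)
    next
      case False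
      then have "segA s = segA t \<and> segB s = segB t" using assms(1,2) unfolding sub_def by auto
      then have "segmu s = segmu t" using assms(3) by simp
      then show ?thesis using False unfolding nuval_def FF_snoc fu by (simp add: fstep_def u_def algebra_simps)
    qed
  qed
  have "nus p (xs @ u # s # ys) = nus p xs @ (segA u, segB u, nuval q u) # (segA s, segB s, nuval (q @ [u]) s) # nus (q @ [u, s]) ys"
    by (simp add: nus_append q_def)
  moreover have "nus p (xs @ s # t # ys) = nus p xs @ (segA s, segB s, nuval q s) # (segA t, segB t, nuval (q @ [s]) t) # nus (q @ [s, t]) ys"
    by (simp add: nus_append q_def)
  ultimately show ?thesis
    unfolding u_def[symmetric] using c n1 n2 by (simp add: u_def)
qed

definition kle :: "seg \<Rightarrow> seg \<Rightarrow> bool" where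
  "kle x y \<longleftrightarrow> segB x < segB y \<or> (segB x = segB y \<and> segA y \<le> segA x)"

lemma nus_sorted: "sorted_wrt kle (p @ L) \<Longrightarrow> nus p L = L"
proof (induction L arbitrary: p)
  case Nil then show ?case by simp
next
  case (Cons x L)
  have "\<forall>y\<in>set p. kle y x" using Cons.prems by (simp add: sorted_wrt_append)
  then have "\<forall>y\<in>set p. \<not> sub y x" unfolding kle_def sub_def by auto
  then have "FF p x = (1, 0)" unfolding FF_def by (rule foldl_noop)
  then have "nuval p x = segmu x" by (simp add: nuval_def)
  moreover have "nus (p @ [x]) L = L" using Cons.IH[of "p @ [x]"] Cons.prems by simp
  ultimately show ?case by (simp add: seg_eta)
qed



lemma lstep_shape:
  assumes "i + 1 < length L"
  obtains (noop) "reorder i L = L"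
  | (c1) xs s t ys where "L = xs @ s # t # ys" "length xs = i"
      "reorder i L = xs @ (segA t, segB t, 2*segmu s - segmu t) # s # ys" "segB t \<le> segB s" "segA s \<le> segA t"
  | (c2) xs s t ys where "L = xs @ s # t # ys" "length xs = i"
      "reorder i L = xs @ t # (segA s, segB s, 2*segmu t - segmu s) # ys" "segB s \<le> segB t" "segA t \<le> segA s"
      "\<not> (segB t \<le> segB s \<and> segA s \<le> segA t)"
proof -
  obtain xs s t ys where L: "L = xs @ s # t # ys" "length xs = i"
    using split3[OF assms] by metis
  have r: "reorder i L = (if segB t \<le> segB s \<and> segA s \<le> segA t then xs @ (segA t, segB t, 2 * segmu s - segmu t) # s # ys
     else if segB s \<le> segB t \<and> segA t \<le> segA s then xs @ t # (segA s, segB s, 2 * segmu t - segmu s) # ys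
     else xs @ s # t # ys)"
    using reorder_app[of xs s t ys] L by simp
  show ?thesis
  proof (cases "segB t \<le> segB s \<and> segA s \<le> segA t")
    case True show ?thesis by (rule c1[OF L]) (use r True in auto)
  next
    case F1: False
    show ?thesis
    proof (cases "segB s \<le> segB t \<and> segA t \<le> segA s")
      case True show ?thesis by (rule c2[OF L]) (use r F1 True in auto)
    next
      case False show ?thesis by (rule noop) (use r F1 False L in auto)
    qed
  qed
qed

definition AB :: "seg \<Rightarrow> rat \<times> rat" where "AB x = (segA x, segB x)"

lemma AB_new[simp]: "AB (a, b, m) = (a, b)" by (simp add: AB_def)
lemma AB_eq: "AB x = AB y \<longleftrightarrow> segA x = segA y \<and> segB x = segB y" by (simp add: AB_def)

lemma lstep_mset_AB: "lstep L L' \<Longrightarrow> mset (map AB L') = mset (map AB L)"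
proof -
  assume "lstep L L'"
  then obtain i where i: "i + 1 < length L" "L' = reorder i L" unfolding lstep_def by blast
  from i(1) show ?thesis
  proof (cases rule: lstep_shape)
    case noop then show ?thesis using i by simp
  next
    case (c1 xs s t ys) then show ?thesis using i by (simp add: AB_def)
  next
    case (c2 xs s t ys) then show ?thesis using i by (simp add: AB_def)
  qed
qed

lemma lsteps_mset_AB: "lstep\<^sup>*\<^sup>* L L' \<Longrightarrow> mset (map AB L') = mset (map AB L)"
  by (induction rule: rtranclp_induct) (auto dest!: lstep_mset_AB)

lemma lsteps_set_AB: "lstep\<^sup>*\<^sup>* L L' \<Longrightarrow> AB ` set L' = AB ` set L"
  using lsteps_mset_AB by (metis set_map set_mset_mset)

definition ocR :: "seg \<Rightarrow> seg \<Rightarrow> bool" where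
  "ocR x y \<longleftrightarrow> \<not> (segA y < segA x \<and> segB y < segB x)"

lemma oc_swap:
  assumes "sorted_wrt ocR (xs @ s # t # ys)" "segA u = segA t" "segB u = segB t"
    "segA v = segA s" "segB v = segB s" "ocR t s"
  shows "sorted_wrt ocR (xs @ u # v # ys)"
proof -
  have e: "\<And>x. ocR x u = ocR x t" "\<And>x. ocR x v = ocR x s" "\<And>y. ocR u y = ocR t y" "\<And>y. ocR v y = ocR s y"
    using assms(2-5) by (simp_all add: ocR_def)
  show ?thesis using assms(1,6) by (simp add: sorted_wrt_append e)
qed

lemma lstep_oc: "lstep L L' \<Longrightarrow> sorted_wrt ocR L \<Longrightarrow> sorted_wrt ocR L'"
proof -
  assume st: "lstep L L'" and o: "sorted_wrt ocR L"
  then obtain i where i: "i + 1 < length L" "L' = reorder i L" unfolding lstep_def by blast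
  from i(1) show ?thesis
  proof (cases rule: lstep_shape)
    case noop then show ?thesis using i o by simp
  next
    case (c1 xs s t ys) then show ?thesis using i o oc_swap[of xs s t ys] by (simp add: ocR_def)
  next
    case (c2 xs s t ys) then show ?thesis using i o oc_swap[of xs s t ys] by (simp add: ocR_def)
  qed
qed

lemma lsteps_oc: "lstep\<^sup>*\<^sup>* L L' \<Longrightarrow> sorted_wrt ocR L \<Longrightarrow> sorted_wrt ocR L'"
  by (induction rule: rtranclp_induct) (auto intro: lstep_oc)

lemma kle_trans: "kle x y \<Longrightarrow> kle y z \<Longrightarrow> kle x z"
  unfolding kle_def by auto

lemma kle_AB: "AB x = AB x' \<Longrightarrow> AB y = AB y' \<Longrightarrow> kle x y = kle x' y'"
  unfolding kle_def AB_def by auto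

lemma bubble: "sorted_wrt ocR (x # ys) \<Longrightarrow> sorted_wrt kle ys \<Longrightarrow> \<exists>L'. lstep\<^sup>*\<^sup>* (x # ys) L' \<and> sorted_wrt kle L'"
proof (induction ys arbitrary: x)
  case Nil then show ?case by auto
next
  case (Cons y zs)
  show ?case
  proof (cases "kle x y")
    case True
    then have "sorted_wrt kle (x # y # zs)" using Cons.prems(2) by (auto intro: kle_trans[OF True])
    then show ?thesis by blast
  next
    case False
    have oxy: "ocR x y" using Cons.prems(1) by simp
    have c: "segB y \<le> segB x \<and> segA x \<le> segA y"
      using False oxy unfolding kle_def ocR_def by auto
    define y' where "y' = (segA y, segB y, 2*segmu x - segmu y)"
    have "reorder (length []) ([] @ x # y # zs) = y' # x # zs"
      using reorder_app[of "[]" x y zs] c y'_def by simp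
    then have st: "lstep (x # y # zs) (y' # x # zs)" unfolding lstep_def by (intro exI[of _ 0]) simp
    have "sorted_wrt ocR (x # zs)" using Cons.prems(1) by simp
    moreover have "sorted_wrt kle zs" using Cons.prems(2) by simp
    ultimately obtain W where W: "lstep\<^sup>*\<^sup>* (x # zs) W" "sorted_wrt kle W" using Cons.IH by blast
    have "lstep\<^sup>*\<^sup>* (x # y # zs) (y' # W)"
      using st lsteps_Cons[OF W(1), of y'] by (meson converse_rtranclp_into_rtranclp)
    moreover have "sorted_wrt kle (y' # W)"
    proof -
      have "kle y' w" if "w \<in> set W" for w
      proof -
        have "AB w \<in> AB ` set (x # zs)" using lsteps_set_AB[OF W(1)] that by blast
        then obtain w0 where w0: "w0 \<in> set (x # zs)" "AB w = AB w0" by (meson imageE)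
        have "kle y w0"
        proof (cases "w0 = x")
          case True then show ?thesis using False c unfolding kle_def by auto
        next
          case False then show ?thesis using w0 Cons.prems(2) by simp
        qed
        then show ?thesis using kle_AB[of y' y w w0] w0 by (simp add: y'_def AB_def)
      qed
      then show ?thesis using W(2) by simp
    qed
    ultimately show ?thesis by blast
  qed
qed

lemma sort_exists: "sorted_wrt ocR L \<Longrightarrow> \<exists>L'. lstep\<^sup>*\<^sup>* L L' \<and> sorted_wrt kle L'"
proof (induction L)
  case Nil then show ?case by auto
next
  case (Cons x xs)
  then obtain ys where ys: "lstep\<^sup>*\<^sup>* xs ys" "sorted_wrt kle ys" by auto
  have a: "lstep\<^sup>*\<^sup>* (x # xs) (x # ys)" by (rule lsteps_Cons[OF ys(1)])
  have "sorted_wrt ocR (x # ys)" using lsteps_oc[OF a Cons.prems] .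
  then obtain L' where "lstep\<^sup>*\<^sup>* (x # ys) L'" "sorted_wrt kle L'" using bubble ys(2) by blast
  then show ?case using a by (meson rtranclp_trans)
qed

definition condNL :: "seg list \<Rightarrow> bool" where
  "condNL L \<longleftrightarrow> (\<forall>i. i + 1 < length L \<longrightarrow>
        \<bar>segA (L ! (i+1)) - segA (L ! i)\<bar> + \<bar>segB (L ! (i+1)) - segB (L ! i)\<bar>
          \<ge> of_int \<bar>segmu (L ! (i+1)) - segmu (L ! i)\<bar>)"

lemma condN_iff: "condN S \<longleftrightarrow> (\<forall>\<rho>. condNL (S \<rho>))"
  by (simp add: condN_def condNL_def)

definition skey :: "seg \<Rightarrow> rat \<times> rat \<times> int" where
  "skey x = (segB x, - segA x, segmu x)"

lemma sorted_skey:
  assumes "sorted_wrt kle L" "condNL L"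
  shows "sorted (map skey L)"
proof -
  have "skey (L ! i) \<le> skey (L ! Suc i)" if "Suc i < length L" for i
  proof -
    have k: "kle (L ! i) (L ! Suc i)" using assms(1) that by (simp add: sorted_wrt_iff_nth_less)
    have n: "\<bar>segA (L ! (i+1)) - segA (L ! i)\<bar> + \<bar>segB (L ! (i+1)) - segB (L ! i)\<bar>
          \<ge> of_int \<bar>segmu (L ! (i+1)) - segmu (L ! i)\<bar>" using assms(2) that by (simp add: condNL_def)
    show ?thesis
    proof (cases "segA (L ! i) = segA (L ! Suc i) \<and> segB (L ! i) = segB (L ! Suc i)")
      case True
      then have "segmu (L ! i) = segmu (L ! Suc i)" using n by simp
      then show ?thesis using True by (simp add: skey_def)
    next
      case False then show ?thesis using k by (auto simp: skey_def kle_def)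
    qed
  qed
  then show ?thesis by (simp add: sorted_wrt_iff_nth_Suc_transp)
qed

lemma skey_inj: "inj skey"
  by (rule injI) (metis seg_eta skey_def neg_equal_iff_equal prod.inject)

lemma sorted_unique:
  assumes "sorted_wrt kle L1" "sorted_wrt kle L2" "condNL L1" "condNL L2" "mset L1 = mset L2"
  shows "L1 = L2"
proof -
  have s1: "sorted (map skey L1)" and s2: "sorted (map skey L2)" using sorted_skey assms by auto
  have "mset (map skey L1) = mset (map skey L2)" using assms(5) by simp
  then have "sort (map skey L2) = map skey L1" using properties_for_sort s1 by metis
  moreover have "sort (map skey L2) = map skey L2" using s2 by (simp add: sorted_sort_id)
  ultimately have "map skey L1 = map skey L2" by simp
  then show ?thesis using skey_inj by simp
qed



lemma reorder_step_E:
  assumes "reorder_step T T'"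
  obtains \<rho> i where "i + 1 < length (T \<rho>)" "T' = T(\<rho> := reorder i (T \<rho>))"
  using assms unfolding reorder_step_def by blast

lemma lift_step: "lstep L1 L2 \<Longrightarrow> reorder_step (T(\<rho> := L1)) (T(\<rho> := L2))"
proof -
  assume "lstep L1 L2"
  then obtain i where "i + 1 < length L1" "L2 = reorder i L1" unfolding lstep_def by blast
  then show ?thesis unfolding reorder_step_def by (intro exI[of _ \<rho>] exI[of _ i]) simp
qed

lemma lift_steps: "lstep\<^sup>*\<^sup>* (T \<rho>) L \<Longrightarrow> reorder_step\<^sup>*\<^sup>* T (T(\<rho> := L))"
proof (induction rule: rtranclp_induct)
  case base then show ?case by simp
next
  case (step y z)
  have "reorder_step (T(\<rho> := y)) (T(\<rho> := z))" by (rule lift_step[OF step(2)])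
  moreover have "reorder_step\<^sup>*\<^sup>* T (T(\<rho> := y))" using step(3) by (simp add: fun_upd_def)
  ultimately have "reorder_step\<^sup>*\<^sup>* T (T(\<rho> := z))" by (simp add: rtranclp.rtrancl_into_rtrancl)
  then show ?case by (simp add: fun_upd_def)
qed

lemma sort_all:
  assumes "finite F" "\<forall>\<rho>. sorted_wrt ocR (T \<rho>)"
  shows "\<exists>T'. reorder_step\<^sup>*\<^sup>* T T' \<and> (\<forall>\<rho>\<in>F. sorted_wrt kle (T' \<rho>)) \<and> (\<forall>\<rho>. \<rho> \<notin> F \<longrightarrow> T' \<rho> = T \<rho>)"
  using assms(1)
proof (induction F rule: finite_induct)
  case empty then show ?case by auto
next
  case (insert \<rho> F)
  then obtain T1 where T1: "reorder_step\<^sup>*\<^sup>* T T1" "\<forall>\<rho>\<in>F. sorted_wrt kle (T1 \<rho>)" "\<forall>\<rho>. \<rho> \<notin> F \<longrightarrow> T1 \<rho> = T \<rho>"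
    by blast
  have "T1 \<rho> = T \<rho>" using T1(3) insert(2) by simp
  then obtain L where L: "lstep\<^sup>*\<^sup>* (T1 \<rho>) L" "sorted_wrt kle L"
    using sort_exists assms(2) by metis
  have "reorder_step\<^sup>*\<^sup>* T (T1(\<rho> := L))"
    using T1(1) lift_steps[of T1 \<rho> L, OF L(1)] by (meson rtranclp_trans)
  moreover have "\<forall>\<sigma>\<in>insert \<rho> F. sorted_wrt kle ((T1(\<rho> := L)) \<sigma>)" using T1(2) L(2) by simp
  moreover have "\<forall>\<sigma>. \<sigma> \<notin> insert \<rho> F \<longrightarrow> (T1(\<rho> := L)) \<sigma> = T \<sigma>" using T1(3) by simp
  ultimately show ?case by blast
qed

lemma oc_iff: "(\<forall>i<length L. \<forall>j<length L. segA (L ! i) > segA (L ! j) \<and> segB (L ! i) > segB (L ! j) \<longrightarrow> i > j)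
   \<longleftrightarrow> sorted_wrt ocR L"
proof
  assume H: "\<forall>i<length L. \<forall>j<length L. segA (L ! i) > segA (L ! j) \<and> segB (L ! i) > segB (L ! j) \<longrightarrow> i > j"
  show "sorted_wrt ocR L" unfolding sorted_wrt_iff_nth_less ocR_def
  proof (intro allI impI notI)
    fix i j assume a: "i < j" "j < length L" "segA (L!j) < segA (L!i) \<and> segB (L!j) < segB (L!i)"
    then have "i > j" using H by auto
    then show False using a(1) by simp
  qed
next
  assume H: "sorted_wrt ocR L"
  show "\<forall>i<length L. \<forall>j<length L. segA (L ! i) > segA (L ! j) \<and> segB (L ! i) > segB (L ! j) \<longrightarrow> i > j"
  proof (intro allI impI)
    fix i j assume a: "i < length L" "j < length L" "segA (L ! i) > segA (L ! j) \<and> segB (L ! i) > segB (L ! j)"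
    show "i > j"
    proof (rule ccontr)
      assume "\<not> i > j" then have "i < j \<or> i = j" by auto
      then show False using H a unfolding sorted_wrt_iff_nth_less ocR_def by auto
    qed
  qed
qed

lemma formal_oc: "formal_ext_multiseg d orth dt T \<Longrightarrow> sorted_wrt ocR (T \<rho>)"
  unfolding formal_ext_multiseg_def oc_iff[symmetric] by blast

lemma standard_iff: "standard T \<longleftrightarrow> (\<forall>\<rho>. sorted_wrt kle (T \<rho>))"
proof -
  have "(\<forall>i<length L. \<forall>j<length L.
        (segB (L ! i) < segB (L ! j) \<or> (segB (L ! i) = segB (L ! j) \<and> segA (L ! i) > segA (L ! j))) \<longrightarrow> i < j)
     \<longleftrightarrow> sorted_wrt kle L" for L
  proof
    assume H: "\<forall>i<length L. \<forall>j<length L.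
        (segB (L ! i) < segB (L ! j) \<or> (segB (L ! i) = segB (L ! j) \<and> segA (L ! i) > segA (L ! j))) \<longrightarrow> i < j"
    show "sorted_wrt kle L" unfolding sorted_wrt_iff_nth_less
    proof (intro allI impI)
      fix i j assume a: "i < j" "j < length L"
      show "kle (L ! i) (L ! j)"
      proof (rule ccontr)
        assume "\<not> kle (L ! i) (L ! j)"
        then have "segB (L ! j) < segB (L ! i) \<or> (segB (L ! j) = segB (L ! i) \<and> segA (L ! j) > segA (L ! i))"
          unfolding kle_def by auto
        then have "j < i" using H a(2) a(1) by (meson order.strict_trans)
        then show False using a by simp
      qed
    qed
  next
    assume H: "sorted_wrt kle L"
    show "\<forall>i<length L. \<forall>j<length L.
        (segB (L ! i) < segB (L ! j) \<or> (segB (L ! i) = segB (L ! j) \<and> segA (L ! i) > segA (L ! j))) \<longrightarrow> i < j"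
    proof (intro allI impI)
      fix i j assume a: "i < length L" "j < length L"
        "segB (L ! i) < segB (L ! j) \<or> (segB (L ! i) = segB (L ! j) \<and> segA (L ! i) > segA (L ! j))"
      show "i < j"
      proof (rule ccontr)
        assume "\<not> i < j" then have "j < i \<or> i = j" by auto
        then show False
        proof
          assume "j < i"
          then have "kle (L ! j) (L ! i)" using H a(1) unfolding sorted_wrt_iff_nth_less by blast
          then show False using a(3) unfolding kle_def by auto
        next
          assume "i = j" then show False using a(3) by auto
        qed
      qed
    qed
  qed
  then show ?thesis unfolding standard_def by blast
qed



lemma seg_b_of_int: "formal_ext_segment x \<Longrightarrow> of_int (seg_b x) = segA x - segB x + 1"
proof -
  assume "formal_ext_segment x"
  then have "segA x - segB x \<in> \<int>" unfolding formal_ext_segment_def by blast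
  then obtain k where k: "segA x - segB x = of_int k" by (rule Ints_cases)
  then show ?thesis unfolding seg_b_def by simp
qed

lemma bound_new:
  assumes "ext_segment s" "formal_ext_segment t" "segB t \<le> segB s" "segA s \<le> segA t"
    "of_int \<bar>segmu t - segmu s\<bar> \<le> \<bar>segA t - segA s\<bar> + \<bar>segB t - segB s\<bar>"
  shows "\<bar>2*segmu s - segmu t\<bar> \<le> seg_b t"
proof -
  have fs: "formal_ext_segment s" and ms: "\<bar>segmu s\<bar> \<le> seg_b s" using assms(1) unfolding ext_segment_def by auto
  have "(of_int (seg_b t - seg_b s) :: rat) = \<bar>segA t - segA s\<bar> + \<bar>segB t - segB s\<bar>"
    using seg_b_of_int[OF fs] seg_b_of_int[OF assms(2)] assms(3,4) by simp
  then have "(of_int \<bar>segmu t - segmu s\<bar> :: rat) \<le> of_int (seg_b t - seg_b s)" using assms(5) by simp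
  then have "\<bar>segmu t - segmu s\<bar> \<le> seg_b t - seg_b s" by (simp only: of_int_le_iff)
  then show ?thesis using ms unfolding abs_le_iff by linarith
qed

lemma ext_new:
  assumes "formal_ext_segment t" "even (m - segmu t)" "\<bar>m\<bar> \<le> seg_b t"
  shows "ext_segment (segA t, segB t, m)"
proof -
  have b: "seg_b (segA t, segB t, m) = seg_b t"
    by (rule seg_ab_cong) simp_all
  have f: "segA t - segB t \<in> \<int>" "segA t + segB t \<in> \<int>" "segB t \<le> segA t" "even (segmu t - seg_b t)"
    using assms(1) unfolding formal_ext_segment_def by blast+
  have "m - seg_b t = (m - segmu t) + (segmu t - seg_b t)" by simp
  then have e: "even (m - seg_b t)" using assms(2) f(4) by presburger
  have "formal_ext_segment (segA t, segB t, m)"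
    unfolding formal_ext_segment_def using f e b by simp
  then show ?thesis unfolding ext_segment_def using b assms(3) by simp
qed

lemma ext_swap:
  assumes E: "ext_multiseg d orth dt T" and L: "T \<rho>0 = xs @ s # t # ys"
    and u: "segA u = segA t" "segB u = segB t" and v: "segA v = segA s" "segB v = segB s"
    and o: "ocR t s" and eu: "ext_segment u" and ev: "ext_segment v"
    and par: "even (parity_sum (xs @ u # v # ys) - parity_sum (T \<rho>0))"
  shows "ext_multiseg d orth dt (T(\<rho>0 := xs @ u # v # ys))"
proof -
  define L' where "L' = xs @ u # v # ys"
  define T' where "T' = T(\<rho>0 := L')"
  have supp: "supp T' = supp T" unfolding supp_def T'_def L'_def using L by auto
  have r0: "\<rho>0 \<in> supp T" unfolding supp_def using L by simp
  have abu: "seg_a u = seg_a t" "seg_b u = seg_b t" using seg_ab_cong[OF u] by auto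
  have abv: "seg_a v = seg_a s" "seg_b v = seg_b s" using seg_ab_cong[OF v] by auto
  have fm: "formal_ext_multiseg d orth dt T" using E unfolding ext_multiseg_def by blast
  have fin: "finite (supp T)"
    and fs: "\<forall>\<rho>. \<forall>x\<in>set (T \<rho>). formal_ext_segment x"
    and ab: "\<forall>\<rho>. \<forall>x\<in>set (T \<rho>). segA x + segB x \<ge> 0"
    and gp: "good_parity_param d orth dt T"
    and pe: "even (\<Sum>\<rho>\<in>supp T. parity_sum (T \<rho>))"
    using fm unfolding formal_ext_multiseg_def by blast+
  have oc: "\<forall>\<rho>. sorted_wrt ocR (T \<rho>)" using formal_oc[OF fm] by blast
  have ex: "\<forall>\<rho>. \<forall>x\<in>set (T \<rho>). ext_segment x"
    using E unfolding ext_multiseg_def by blast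
  have tin: "t \<in> set (T \<rho>0)" "s \<in> set (T \<rho>0)" using L by auto
  have ab0: "\<forall>x\<in>set (T \<rho>0). segA x + segB x \<ge> 0" using ab by blast
  have setL: "set L' \<subseteq> set (T \<rho>0) \<union> {u, v}" unfolding L'_def L by auto
  have fs': "\<forall>\<rho>. \<forall>x\<in>set (T' \<rho>). formal_ext_segment x"
    using fs setL eu ev unfolding T'_def ext_segment_def by auto
  have ex': "\<forall>\<rho>. \<forall>x\<in>set (T' \<rho>). ext_segment x"
    using ex setL eu ev unfolding T'_def by auto
  have ab': "\<forall>\<rho>. \<forall>x\<in>set (T' \<rho>). segA x + segB x \<ge> 0"
  proof (intro allI ballI)
    fix \<rho> x assume x: "x \<in> set (T' \<rho>)"
    show "segA x + segB x \<ge> 0"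
    proof (cases "\<rho> = \<rho>0")
      case True
      then have "x \<in> set (T \<rho>0) \<or> x = u \<or> x = v" using x setL unfolding T'_def by auto
      then show ?thesis
      proof (elim disjE)
        assume "x \<in> set (T \<rho>0)" then show ?thesis using ab0 by blast
      next
        assume "x = u" then show ?thesis using ab0 tin u by simp
      next
        assume "x = v" then show ?thesis using ab0 tin v by simp
      qed
    next
      case False then show ?thesis using x ab unfolding T'_def by simp
    qed
  qed
  have oc': "\<forall>\<rho>. sorted_wrt ocR (T' \<rho>)"
  proof -
    have "sorted_wrt ocR (xs @ s # t # ys)" using oc L by metis
    then have "sorted_wrt ocR L'" unfolding L'_def using oc_swap[of xs s t ys u v] u v o by blast
    then show ?thesis using oc unfolding T'_def by simp
  qed
  have OC': "\<forall>\<rho>. \<forall>i<length (T' \<rho>). \<forall>j<length (T' \<rho>).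
        segA (T' \<rho> ! i) > segA (T' \<rho> ! j) \<and> segB (T' \<rho> ! i) > segB (T' \<rho> ! j) \<longrightarrow> i > j"
    using oc' oc_iff by blast
  have sl: "sum_list (map h L') = sum_list (map h (T \<rho>0))" if "h u = h t" "h v = h s" for h :: "seg \<Rightarrow> 'z::comm_monoid_add"
    unfolding L'_def L using that by (simp add: ac_simps)
  have pd: "param_dim d T' = param_dim d T"
    unfolding param_dim_def supp
    by (rule sum.cong) (auto simp: T'_def sl abu abv)
  have pdt: "param_det dt T' = param_det dt T"
    unfolding param_det_def supp
    by (rule sum.cong) (auto simp: T'_def sl abu abv)
  have allP: "(\<forall>\<rho>\<in>supp T'. \<forall>x\<in>set (T' \<rho>). P \<rho> x) \<longleftrightarrow> (\<forall>\<rho>\<in>supp T. \<forall>x\<in>set (T \<rho>). P \<rho> x)"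
    if "\<And>\<rho>. P \<rho> u = P \<rho> t" "\<And>\<rho>. P \<rho> v = P \<rho> s" for P
  proof -
    have "(\<forall>x\<in>set (T' \<rho>). P \<rho> x) \<longleftrightarrow> (\<forall>x\<in>set (T \<rho>). P \<rho> x)" for \<rho>
      unfolding T'_def L'_def using L that by auto
    then show ?thesis unfolding supp by simp
  qed
  have so1: "\<And>\<rho>. summand_orth orth \<rho> u = summand_orth orth \<rho> t" "\<And>\<rho>. summand_orth orth \<rho> v = summand_orth orth \<rho> s"
    unfolding summand_orth_def abu abv by auto
  have so2: "\<And>\<rho>. (\<not> summand_orth orth \<rho> u) = (\<not> summand_orth orth \<rho> t)" "\<And>\<rho>. (\<not> summand_orth orth \<rho> v) = (\<not> summand_orth orth \<rho> s)"
    using so1 by auto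
  have gp': "good_parity_param d orth dt T'"
    using gp unfolding good_parity_param_def pd pdt
      allP[of "\<lambda>\<rho> x. summand_orth orth \<rho> x", OF so1]
      allP[of "\<lambda>\<rho> x. \<not> summand_orth orth \<rho> x", OF so2] .
  define \<delta> where "\<delta> = parity_sum L' - parity_sum (T \<rho>0)"
  have "parity_sum (T' \<rho>) = parity_sum (T \<rho>) + (if \<rho> = \<rho>0 then \<delta> else 0)" for \<rho>
    unfolding T'_def \<delta>_def by simp
  then have "(\<Sum>\<rho>\<in>supp T'. parity_sum (T' \<rho>)) = (\<Sum>\<rho>\<in>supp T. parity_sum (T \<rho>)) + \<delta>"
    unfolding supp using fin r0 by (simp add: sum.distrib)
  then have pe': "even (\<Sum>\<rho>\<in>supp T'. parity_sum (T' \<rho>))"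
    using pe par unfolding \<delta>_def L'_def by simp
  have fin': "finite (supp T')" using fin supp by simp
  show ?thesis
    unfolding T'_def[symmetric] L'_def[symmetric] ext_multiseg_def formal_ext_multiseg_def
    using fin' fs' OC' ab' gp' pe' ex' by blast
qed



lemma nth_mid: "length xs = i \<Longrightarrow> (xs @ s # t # ys) ! i = s \<and> (xs @ s # t # ys) ! (i+1) = t"
  by (simp add: nth_append)

lemma ext_step:
  assumes E: "ext_multiseg d orth dt T" and N: "condN T" and R: "reorder_step T T'"
  shows "ext_multiseg d orth dt T'"
proof -
  obtain \<rho> i where i: "i + 1 < length (T \<rho>)" and T': "T' = T(\<rho> := reorder i (T \<rho>))"
    using R by (rule reorder_step_E)
  have fs: "\<forall>x\<in>set (T \<rho>). formal_ext_segment x"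
    using E unfolding ext_multiseg_def formal_ext_multiseg_def by blast
  have ex: "\<forall>x\<in>set (T \<rho>). ext_segment x"
    using E unfolding ext_multiseg_def by blast
  have cn: "condNL (T \<rho>)" using N unfolding condN_iff by blast
  from i show ?thesis
  proof (cases rule: lstep_shape)
    case noop then show ?thesis using E T' by simp
  next
    case (c1 xs s t ys)
    have st: "s \<in> set (T \<rho>)" "t \<in> set (T \<rho>)" using c1(1) by auto
    have nt: "T \<rho> ! i = s" "T \<rho> ! (i+1) = t" using nth_mid[OF c1(2)] c1(1) by simp_all
    have n: "of_int \<bar>segmu t - segmu s\<bar> \<le> \<bar>segA t - segA s\<bar> + \<bar>segB t - segB s\<bar>"
      using cn[unfolded condNL_def, rule_format, OF i] unfolding nt .
    have es: "ext_segment s" and et: "ext_segment t" using ex st by auto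
    have ft: "formal_ext_segment t" and fs': "formal_ext_segment s" using fs st by auto
    have ms: "even (segmu s - seg_b s)" "even (segmu t - seg_b t)"
      using ft fs' unfolding formal_ext_segment_def by blast+
    define u where "u = (segA t, segB t, 2*segmu s - segmu t)"
    have "even ((2*segmu s - segmu t) - segmu t)" by presburger
    then have eu: "ext_segment u" unfolding u_def
      by (rule ext_new[OF ft]) (rule bound_new[OF es ft c1(4) c1(5) n])
    define Q where "Q = 0 + (\<Sum>x\<leftarrow>xs. seg_b x - 1)"
    have "parity_sum (xs @ u # s # ys) - parity_sum (T \<rho>) = psr Q (u # s # ys) - psr Q (s # t # ys)"
      unfolding parity_sum_psr c1(1) psr_append Q_def by simp
    then have par: "even (parity_sum (xs @ u # s # ys) - parity_sum (T \<rho>))"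
      using psr_swap1[OF ms, of Q ys] unfolding u_def by simp
    have o: "ocR t s" using c1(4) unfolding ocR_def by auto
    have "ext_multiseg d orth dt (T(\<rho> := xs @ u # s # ys))"
      by (rule ext_swap[OF E c1(1) _ _ _ _ o eu es par]) (simp_all add: u_def)
    then show ?thesis using T' c1(3) u_def by simp
  next
    case (c2 xs s t ys)
    have st: "s \<in> set (T \<rho>)" "t \<in> set (T \<rho>)" using c2(1) by auto
    have nt: "T \<rho> ! i = s" "T \<rho> ! (i+1) = t" using nth_mid[OF c2(2)] c2(1) by simp_all
    have n: "of_int \<bar>segmu t - segmu s\<bar> \<le> \<bar>segA t - segA s\<bar> + \<bar>segB t - segB s\<bar>"
      using cn[unfolded condNL_def, rule_format, OF i] unfolding nt .
    then have n': "of_int \<bar>segmu s - segmu t\<bar> \<le> \<bar>segA s - segA t\<bar> + \<bar>segB s - segB t\<bar>"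
      by (simp add: abs_minus_commute)
    have es: "ext_segment s" and et: "ext_segment t" using ex st by auto
    have ft: "formal_ext_segment t" and fs': "formal_ext_segment s" using fs st by auto
    have ms: "even (segmu s - seg_b s)" "even (segmu t - seg_b t)"
      using ft fs' unfolding formal_ext_segment_def by blast+
    define v where "v = (segA s, segB s, 2*segmu t - segmu s)"
    have "even ((2*segmu t - segmu s) - segmu s)" by presburger
    then have ev: "ext_segment v" unfolding v_def
      by (rule ext_new[OF fs']) (rule bound_new[OF et fs' c2(4) c2(5) n'])
    have bv: "seg_b v = seg_b s" unfolding v_def by (rule seg_ab_cong) simp_all
    have mv: "even (segmu v - seg_b v)" unfolding bv using ms(1) unfolding v_def by simp
    define Q where "Q = 0 + (\<Sum>x\<leftarrow>xs. seg_b x - 1)"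
    have "parity_sum (xs @ t # v # ys) - parity_sum (T \<rho>) = psr Q (t # v # ys) - psr Q (s # t # ys)"
      unfolding parity_sum_psr c2(1) psr_append Q_def by simp
    moreover have "even (psr Q ((segA v, segB v, 2*segmu t - segmu v) # t # ys) - psr Q (t # v # ys))"
      by (rule psr_swap1[OF ms(2) mv])
    moreover have "(segA v, segB v, 2*segmu t - segmu v) = s" unfolding v_def by (simp add: seg_eta)
    ultimately have par: "even (parity_sum (xs @ t # v # ys) - parity_sum (T \<rho>))"
      by (metis dvd_minus_iff minus_diff_eq)
    have o: "ocR t s" using c2(5) unfolding ocR_def by auto
    have "ext_multiseg d orth dt (T(\<rho> := xs @ t # v # ys))"
      by (rule ext_swap[OF E c2(1) _ _ _ _ o et ev par]) (simp_all add: v_def)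
    then show ?thesis using T' c2(3) v_def by simp
  qed
qed

lemma nu_step:
  assumes N: "condN T" and R: "reorder_step T T'"
  shows "mset (nus [] (T' \<sigma>)) = mset (nus [] (T \<sigma>))"
proof -
  obtain \<rho> i where i: "i + 1 < length (T \<rho>)" and T': "T' = T(\<rho> := reorder i (T \<rho>))"
    using R by (rule reorder_step_E)
  have cn: "condNL (T \<rho>)" using N unfolding condN_iff by blast
  show ?thesis
  proof (cases "\<sigma> = \<rho>")
    case False then show ?thesis using T' by simp
  next
    case True
    from i show ?thesis
    proof (cases rule: lstep_shape)
      case noop then show ?thesis using T' True by simp
    next
      case (c1 xs s t ys)
      have nt: "T \<rho> ! i = s" "T \<rho> ! (i+1) = t" using nth_mid[OF c1(2)] c1(1) by simp_all
      have n: "of_int \<bar>segmu t - segmu s\<bar> \<le> \<bar>segA t - segA s\<bar> + \<bar>segB t - segB s\<bar>"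
        using cn[unfolded condNL_def, rule_format, OF i] unfolding nt .
      have eq: "segmu s = segmu t" if "segA s = segA t \<and> segB s = segB t"
      proof -
        have "(of_int \<bar>segmu t - segmu s\<bar> :: rat) \<le> 0" using n that by simp
        then show ?thesis by simp
      qed
      show ?thesis using nus_swap1[of t s, OF c1(4) c1(5) eq, of "[]" xs ys] T' True c1(1,3) by simp
    next
      case (c2 xs s t ys)
      define v where "v = (segA s, segB s, 2*segmu t - segmu s)"
      have a: "segB v \<le> segB t" "segA t \<le> segA v" using c2(4,5) by (simp_all add: v_def)
      have b: "segA t = segA v \<and> segB t = segB v \<Longrightarrow> segmu t = segmu v" using c2(4,5,6) by (auto simp: v_def)
      have "(segA v, segB v, 2*segmu t - segmu v) = s" unfolding v_def by (simp add: seg_eta)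
      then show ?thesis using nus_swap1[of v t, OF a b, of "[]" xs ys] T' True c2(1,3) v_def by simp
    qed
  qed
qed

theorem proposition3p5:
  fixes d :: "'r \<Rightarrow> nat" and orth :: "'r \<Rightarrow> bool" and dt :: "'r \<Rightarrow> 'q::ab_group_add"
    and S :: "'r \<Rightarrow> seg list"
  assumes "\<forall>\<rho>. d \<rho> > 0"
    and "\<forall>\<rho>. \<not> orth \<rho> \<longrightarrow> even (d \<rho>) \<and> dt \<rho> = 0"
    and "\<forall>\<rho>. dt \<rho> + dt \<rho> = 0"
    and "Rep d orth dt S"
  shows "\<exists>!S'. S' \<in> equiv_class S \<and> ext_multiseg d orth dt S' \<and> standard S'"
proof -
  have E: "ext_multiseg d orth dt S" and N: "\<And>T. T \<in> equiv_class S \<Longrightarrow> condN T"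
    using assms(4) unfolding Rep_def by blast+
  have cls: "T \<in> equiv_class S \<longleftrightarrow> equivclp reorder_step S T" for T by (simp add: equiv_class_def)
  have r2e: "reorder_step\<^sup>*\<^sup>* S T \<Longrightarrow> equivclp reorder_step S T" for T
    using rtranlcp_le_equivclp[of reorder_step] by blast
  have fwd: "reorder_step\<^sup>*\<^sup>* S T \<Longrightarrow> ext_multiseg d orth dt T" for T
  proof (induction rule: rtranclp_induct)
    case base then show ?case by (rule E)
  next
    case (step y z)
    have "condN y" using N[unfolded cls, OF r2e[OF step(1)]] .
    then show ?case using ext_step step by blast
  qed
  have inv: "equivclp reorder_step S T \<Longrightarrow> mset (nus [] (T \<sigma>)) = mset (nus [] (S \<sigma>))" for T \<sigma>
  proof (induction rule: equivclp_induct)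
    case base then show ?case by simp
  next
    case (step y z)
    have yc: "condN y" using N[unfolded cls, OF step(1)] .
    have "equivclp reorder_step S z" using equivclp_into_equivclp[of reorder_step S y z] step(1) step(2) by blast
    then have zc: "condN z" using N[unfolded cls] by blast
    from step(2) show ?case
    proof
      assume "reorder_step y z" then show ?thesis using nu_step[OF yc] step(3) by simp
    next
      assume "reorder_step z y" then show ?thesis using nu_step[OF zc] step(3) by simp
    qed
  qed
  have fm: "formal_ext_multiseg d orth dt S" using E unfolding ext_multiseg_def by blast
  have fin: "finite (supp S)" using fm unfolding formal_ext_multiseg_def by blast
  have oc: "\<forall>\<rho>. sorted_wrt ocR (S \<rho>)" using formal_oc[OF fm] by blast
  obtain T' where T': "reorder_step\<^sup>*\<^sup>* S T'" "\<forall>\<rho>\<in>supp S. sorted_wrt kle (T' \<rho>)"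
      "\<forall>\<rho>. \<rho> \<notin> supp S \<longrightarrow> T' \<rho> = S \<rho>"
    using sort_all[OF fin oc] by blast
  have std: "standard T'" unfolding standard_iff
  proof
    fix \<rho> show "sorted_wrt kle (T' \<rho>)"
    proof (cases "\<rho> \<in> supp S")
      case True then show ?thesis using T'(2) by blast
    next
      case False then have "T' \<rho> = []" using T'(3) unfolding supp_def by simp
      then show ?thesis by simp
    qed
  qed
  have T'c: "T' \<in> equiv_class S" unfolding cls using r2e[OF T'(1)] .
  have T'e: "ext_multiseg d orth dt T'" using fwd[OF T'(1)] .
  have uniq: "T1 = T2" if "T1 \<in> equiv_class S" "standard T1" "T2 \<in> equiv_class S" "standard T2" for T1 T2
  proof
    fix \<sigma>
    have s1: "sorted_wrt kle (T1 \<sigma>)" using that(2) unfolding standard_iff by blast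
    have s2: "sorted_wrt kle (T2 \<sigma>)" using that(4) unfolding standard_iff by blast
    have c1: "condNL (T1 \<sigma>)" using N[OF that(1)] unfolding condN_iff by blast
    have c2: "condNL (T2 \<sigma>)" using N[OF that(3)] unfolding condN_iff by blast
    have "nus [] (T1 \<sigma>) = T1 \<sigma>" using nus_sorted[of "[]"] s1 by simp
    moreover have "nus [] (T2 \<sigma>) = T2 \<sigma>" using nus_sorted[of "[]"] s2 by simp
    moreover have "mset (nus [] (T1 \<sigma>)) = mset (nus [] (S \<sigma>))" using inv[of T1 \<sigma>] that(1) unfolding cls by blast
    moreover have "mset (nus [] (T2 \<sigma>)) = mset (nus [] (S \<sigma>))" using inv[of T2 \<sigma>] that(3) unfolding cls by blast
    ultimately have "mset (T1 \<sigma>) = mset (T2 \<sigma>)" by simp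
    then show "T1 \<sigma> = T2 \<sigma>" using sorted_unique[OF s1 s2 c1 c2] by blast
  qed
  show ?thesis
  proof (rule ex1I[of _ T'])
    show "T' \<in> equiv_class S \<and> ext_multiseg d orth dt T' \<and> standard T'" using T'c T'e std by blast
  next
    fix T assume "T \<in> equiv_class S \<and> ext_multiseg d orth dt T \<and> standard T"
    then show "T = T'" using uniq[of T T'] T'c std by blast
  qed
qed

end
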